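(* Let $d_0<d_1<\cdots$ be the increasing enumeration of $\{m\ge1:\ c_m=0\}$ and $z_n=\left(\frac{d_{4n}+1}{4}-n\right)\bmod 2$ for $n\ge0$. For every integer $m\ge2$ there exists a positive integer $n$ with $m\mid n$ and $z_n=1$.
   Context: For $n\in\mathbb{N}$ let $s_2(n)$ be the sum of the binary digits of $n$ and $t_n=s_2(n)\bmod 2$ (the Prouhet–Thue–Morse sequence). Let $F(X)=\sum_{n\ge1}t_nX^n\in\mathbb{F}_2[[X]]$ and let $G(X)=\sum_{n\ge1}c_nX^n\in\mathbb{F}_2[[X]]$ be its compositional inverse, i.e. $F(G(X))=G(F(X))=X$. The $c_n$ are identified with integers in $\{0,1\}$. The sequence $(d_n)$ is indexed from $0$, so $d_0=3$, and $\frac{d_{4n}+1}{4}$ is always an integer. *)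

theory Defs
  imports "HOL-Library.Z2" "HOL-Library.Infinite_Set"
          "HOL-Computational_Algebra.Formal_Power_Series"
begin

fun s2 :: "nat \<Rightarrow> nat" where
  "s2 n = (if n = 0 then 0 else n mod 2 + s2 (n div 2))"

definition tm :: "nat \<Rightarrow> bit" where
  "tm n = of_nat (s2 n mod 2)"

definition TM_F :: "bit fps" where
  "TM_F = Abs_fps (\<lambda>n. if n = 0 then 0 else tm n)"

definition dseq :: "bit fps \<Rightarrow> nat \<Rightarrow> nat" where
  "dseq G k = enumerate {m. m \<ge> 1 \<and> fps_nth G m = 0} k"

definition zseq :: "bit fps \<Rightarrow> nat \<Rightarrow> int" where
  "zseq G n = ((int (dseq G (4 * n)) + 1) div 4 - int n) mod 2"

end

theory Submission
  imports Defs
begin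

lemma bit_add_self': "(x::bit) + x = 0" by (cases x) simp_all
lemma two0: "(2::bit fps) = 0"
proof -
  have "fps_nth ((1::bit fps) + 1) n = 0" for n by (simp only: fps_add_nth bit_add_self')
  then have "(1::bit fps) + 1 = 0" by (simp add: fps_eq_iff) 
  then show ?thesis by simp
qed
lemma three1: "(3::bit fps) = 1"
proof -
  have "(3::bit fps) = 2 + 1" by simp
  then show ?thesis by (simp add: two0)
qed
lemma add_self: "(a::bit fps) + a = 0"
  by (metis mult_2 two0 mult_zero_left)
lemma neg_bit: "-(a::bit fps) = a"
  by (metis add_self add_right_imp_eq diff_add_cancel diff_self minus_diff_eq add.commute)
lemma t1: "((1::bit fps) + fps_X)^2 = 1 + fps_X^2"
  by (simp add: power2_eq_square algebra_simps two0 flip: mult_2)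
lemma t2: "(u::bit fps)^3 = 1 + x \<Longrightarrow> U = u + 1 \<Longrightarrow> U^3 + U^2 + U + x = 0"
proof -
  assume a: "u^3 = 1 + x" "U = u + 1"
  have "U^3 + U^2 + U + x = (u^3 + 1) + x + 2 * (2*u^2 + 3*u + 1)"
    unfolding a(2) by algebra
  also have "\<dots> = 0" using a(1) by (simp add: two0 add_self)
  finally show ?thesis .
qed

lemma bit_mult_self: "(x::bit) * x = x" by (cases x) simp_all

lemma bit_cancel: "(x::bit) + (y + x) = y" by (cases x; cases y) simp_all

lemma sum_two_gen: "(\<Sum>i=a..Suc a. (g i :: 'b::comm_monoid_add)) = g a + g (Suc a)"
  by (simp add: sum.atLeast_Suc_atMost)

lemma sum_split_gen: "(\<Sum>i=a..Suc (Suc (a+f)). (g i :: 'b::comm_monoid_add)) = g a + ((\<Sum>i=Suc a..Suc a+f. g i) + g (Suc (Suc (a+f))))"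
  by (simp add: sum.atLeast_Suc_atMost add.assoc)

lemma frob_sum: "(\<Sum>i=a..a+d. fps_nth A i * fps_nth A (2*a+d-i)) = (if even d then fps_nth (A::bit fps) (a + d div 2) else 0)"
proof (induction d arbitrary: a rule: less_induct)
  case (less d)
  show ?case
  proof (cases d)
    case 0 then show ?thesis by (simp add: bit_mult_self)
  next
    case (Suc e)
    show ?thesis
    proof (cases e)
      case 0
      then have d: "d = Suc 0" using Suc by simp
      have "(\<Sum>i=a..a+d. fps_nth A i * fps_nth A (2*a+d-i)) = fps_nth A a * fps_nth A (Suc a) + fps_nth A (Suc a) * fps_nth A a"
        unfolding d by (simp only: sum_two_gen add_Suc_right add_0_right mult_2 diff_add_inverse2 diff_Suc_Suc) (simp add: Suc_diff_le)
      also have "\<dots> = 0" by (simp only: mult.commute[of "fps_nth A (Suc a)"] bit_add_self')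
      finally have "(\<Sum>i=a..a+d. fps_nth A i * fps_nth A (2*a+d-i)) = 0" .
      moreover have "odd d" using d by simp
      ultimately show ?thesis by (simp only: if_False)
    next
      case (Suc f)
      have d: "d = Suc (Suc f)" using Suc \<open>d = Suc e\<close> by simp
      define g where "g i = fps_nth A i * fps_nth A (2*a+d-i)" for i
      have "(\<Sum>i=a..a+d. g i) = g a + ((\<Sum>i=Suc a..Suc a+f. g i) + g (a+d))"
        unfolding d add_Suc_right sum_split_gen by (simp only: add_Suc)
      also have "(\<Sum>i=Suc a..Suc a+f. g i) = (\<Sum>i=Suc a..Suc a+f. fps_nth A i * fps_nth A (2*Suc a+f-i))"
        unfolding d g_def by (intro sum.cong) auto
      also have "\<dots> = (if even f then fps_nth (A::bit fps) (Suc a + f div 2) else 0)"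
        by (rule less[of f "Suc a"]) (simp add: d)
      also have "g a = fps_nth A a * fps_nth A (a+d)" unfolding g_def by (simp add: d)
      also have "g (a+d) = fps_nth A a * fps_nth A (a+d)" unfolding g_def by (simp add: d mult.commute)
      also have "fps_nth A a * fps_nth A (a+d) + ((if even f then fps_nth (A::bit fps) (Suc a + f div 2) else 0) + fps_nth A a * fps_nth A (a+d))
         = (if even f then fps_nth (A::bit fps) (Suc a + f div 2) else 0)"
        by (rule bit_cancel)
      finally have S: "(\<Sum>i=a..a+d. g i) = (if even f then fps_nth (A::bit fps) (Suc a + f div 2) else 0)" .
      have eq: "(if even d then fps_nth A (a + d div 2) else 0) = (if even f then fps_nth (A::bit fps) (Suc a + f div 2) else 0)"
        using d by simp
      show ?thesis using S eq unfolding g_def by (simp only:)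
    qed
  qed
qed

definition sqf :: "bit fps \<Rightarrow> bit fps" where
  "sqf A = Abs_fps (\<lambda>n. if even n then fps_nth A (n div 2) else 0)"

lemma frob: "A * A = sqf A"
proof (rule fps_ext)
  fix n
  have "fps_nth (A * A) n = (\<Sum>i=0..0+n. fps_nth A i * fps_nth A (2*0+n-i))"
    by (simp only: fps_mult_nth add_0_left mult_0_right)
  also have "\<dots> = fps_nth (sqf A) n" unfolding frob_sum by (simp add: sqf_def)
  finally show "fps_nth (A * A) n = fps_nth (sqf A) n" .
qed

declare s2.simps[simp del]
lemma s2_0: "s2 0 = 0" by (subst s2.simps) simp
lemma s2_even: "s2 (2*n) = s2 n"
  by (subst s2.simps) (cases "n = 0"; simp add: s2_0)
lemma s2_odd: "s2 (2*n+1) = Suc (s2 n)"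
  by (subst s2.simps) simp
lemma tm0: "tm 0 = 0" by (simp add: tm_def s2_0)
lemma tm_even: "tm (2*n) = tm n" by (simp add: tm_def s2_even)
lemma tm_odd: "tm (2*n+1) = tm n + 1"
  unfolding tm_def s2_odd by (cases "even (s2 n)") (simp_all add: mod_Suc odd_iff_mod_2_eq_one even_iff_mod_2_eq_zero)

lemma TM_nth: "fps_nth TM_F n = tm n" by (simp add: TM_F_def tm0)

lemma Feq: "(1 + fps_X^2) * TM_F = (1 + fps_X + fps_X^2 + fps_X^3) * sqf TM_F + fps_X"
proof (rule fps_ext)
  fix n
  have L: "fps_nth ((1 + fps_X^2) * TM_F) n = tm n + (if n < 2 then 0 else tm (n-2))"
    by (simp add: distrib_right fps_X_power_mult_nth TM_nth)
  have R: "fps_nth ((1 + fps_X + fps_X^2 + fps_X^3) * sqf TM_F + fps_X) n =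
     (if even n then tm (n div 2) else 0) + (if n < 1 then 0 else if even (n-1) then tm ((n-1) div 2) else 0)
     + (if n < 2 then 0 else if even (n-2) then tm ((n-2) div 2) else 0)
     + (if n < 3 then 0 else if even (n-3) then tm ((n-3) div 2) else 0) + (if n = 1 then 1 else 0)"
    by (simp add: distrib_right fps_X_power_mult_nth TM_nth sqf_def)
  obtain m where "n = 2*m \<or> n = 2*m+1" by (metis dvd_mult_div_cancel odd_two_times_div_two_succ)
  then have "tm n + (if n < 2 then 0 else tm (n-2)) = (if even n then tm (n div 2) else 0) + (if n < 1 then 0 else if even (n-1) then tm ((n-1) div 2) else 0)
     + (if n < 2 then 0 else if even (n-2) then tm ((n-2) div 2) else 0)
     + (if n < 3 then 0 else if even (n-3) then tm ((n-3) div 2) else 0) + (if n = 1 then 1 else 0)"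
  proof
    assume n: "n = 2*m"
    show ?thesis
    proof (cases m)
      case 0 then show ?thesis using n by (simp add: tm0)
    next
      case (Suc k)
      have a: "even n" "\<not> n < 1" "\<not> n < 2" "n \<noteq> 1" "n div 2 = Suc k" "odd (n-1)" "even (n-2)" "(n-2) div 2 = k" "n < 3 \<or> odd (n-3)"
        using n Suc by auto
      have e: "tm n = tm (Suc k)" "tm (n-2) = tm k" using n Suc tm_even[of k] tm_even[of "Suc k"] by auto
      have "(if n < 3 then 0 else if even (n-3) then tm ((n-3) div 2) else (0::bit)) = 0" using a by auto
      then show ?thesis by (simp only: a e if_True if_False add_0_right add_0_left)
    qed
  next
    assume n: "n = 2*m+1"
    show ?thesis
    proof (cases m)
      case 0 
      have a: "n = 1" using n 0 by simp
      have "tm 1 = 1" using tm_odd[of 0] by (simp add: tm0)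
      then show ?thesis by (simp add: a tm0)
    next
      case (Suc k)
      have a: "odd n" "\<not> n < 1" "\<not> n < 2" "\<not> n < 3" "n \<noteq> 1" "(n-1) div 2 = Suc k" "even (n-1)" "odd (n-2)" "(n-3) div 2 = k" "even (n-3)"
        using n Suc by auto
      have e: "tm n = tm (Suc k) + 1" "tm (n-2) = tm k + 1" using n Suc tm_odd[of k] tm_odd[of "Suc k"] by auto
      have g: "tm (Suc k) + 1 + (tm k + 1) = tm (Suc k) + tm k"
        by (cases "tm k"; cases "tm (Suc k)") simp_all
      show ?thesis by (simp only: a e g if_True if_False add_0_right add_0_left)
    qed
  qed
  then show "fps_nth ((1 + fps_X^2) * TM_F) n = fps_nth ((1 + fps_X + fps_X^2 + fps_X^3) * sqf TM_F + fps_X) n"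
    using L R by simp
qed

fun h :: "nat \<Rightarrow> bit" where
  "h n = (if n = 0 then 1 else if n mod 4 \<ge> 2 then 0 else h (n div 4))"
declare h.simps[simp del]
lemma h0: "h 0 = 1" by (subst h.simps) simp

definition KK :: "bit fps" where "KK = Abs_fps (\<lambda>n. if 8 dvd n then h (n div 8) else 0)"

lemma KKn: "fps_nth KK n = (if 8 dvd n then h (n div 8) else 0)" by (simp add: KK_def)

lemma sqf_nth: "fps_nth (sqf A) n = (if even n then fps_nth A (n div 2) else 0)"
  by (simp add: sqf_def)

lemma K4: "fps_nth (sqf (sqf KK)) n = (if 8 dvd n \<and> 4 dvd (n div 8) then h (n div 8 div 4) else 0)"
proof -
  have c: "(even (n::nat) \<and> even (n div 2) \<and> 8 dvd (n div 2 div 2)) = (8 dvd n \<and> 4 dvd (n div 8))"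
  proof -
    have "(even (n::nat) \<and> even (n div 2) \<and> 8 dvd (n div 2 div 2)) = (32 dvd n)" by presburger
    also have "\<dots> = (8 dvd n \<and> 4 dvd (n div 8))" by presburger
    finally show ?thesis .
  qed
  have d: "n div 2 div 2 div 8 = n div 8 div 4" by (simp add: div_mult2_eq)
  show ?thesis unfolding sqf_nth KKn using c d by auto
qed

lemma KEQ: "KK = (1 + fps_X^8) * sqf (sqf KK)"
proof (rule fps_ext)
  fix n
  have R: "fps_nth ((1 + fps_X^8) * sqf (sqf KK)) n = fps_nth (sqf (sqf KK)) n + (if n < 8 then 0 else fps_nth (sqf (sqf KK)) (n-8))"
    by (simp add: distrib_right fps_X_power_mult_nth)
  show "fps_nth KK n = fps_nth ((1 + fps_X^8) * sqf (sqf KK)) n"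
  proof (cases "8 dvd n")
    case False
    have "n \<ge> 8 \<Longrightarrow> \<not> 8 dvd (n-8)" using False by presburger
    then show ?thesis using False unfolding R K4 KKn by simp
  next
    case True
    then obtain m where m: "n = 8*m" by blast
    have nm: "n div 8 = m" using m by simp
    have nm8: "n \<ge> 8 \<Longrightarrow> 8 dvd (n-8) \<and> (n-8) div 8 = m - 1" using m by auto
    obtain q r where qr: "m = 4*q + r" "r < 4" by (metis mod_less_divisor div_mult_mod_eq zero_less_numeral mult.commute)
    have hm: "h m = (if r \<ge> 2 then 0 else if m = 0 then 1 else h q)"
      using qr by (subst h.simps) auto
    have L: "fps_nth KK n = h m" unfolding KKn nm using True by simp
    have R2: "fps_nth ((1 + fps_X^8) * sqf (sqf KK)) n = (if 4 dvd m then h (m div 4) else 0) + (if m = 0 then 0 else if 4 dvd (m-1) then h ((m-1) div 4) else 0)"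
      unfolding R K4 nm using True nm8 m by auto
    show ?thesis
    proof (cases "r = 0")
      case r0: True
      have a: "4 dvd m" "m div 4 = q" "m \<noteq> 0 \<Longrightarrow> \<not> 4 dvd (m-1)" using qr r0 by presburger+
      have "fps_nth ((1 + fps_X^8) * sqf (sqf KK)) n = h q" unfolding R2 using a by simp
      moreover have "h m = h q" using hm r0 qr by (cases "q = 0") (auto simp: h0)
      ultimately show ?thesis using L by simp
    next
      case r1: False
      show ?thesis
      proof (cases "r = 1")
        case True
        have a: "\<not> 4 dvd m" "m \<noteq> 0" "4 dvd (m-1)" "(m-1) div 4 = q" using qr True by presburger+
        have "fps_nth ((1 + fps_X^8) * sqf (sqf KK)) n = h q" unfolding R2 using a by simp
        moreover have "h m = h q" using hm True qr by simp
        ultimately show ?thesis using L by simp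
      next
        case False
        have a: "\<not> 4 dvd m" "m \<noteq> 0 \<Longrightarrow> \<not> 4 dvd (m-1)" "r \<ge> 2" using qr False r1 by presburger+
        have "fps_nth ((1 + fps_X^8) * sqf (sqf KK)) n = 0" unfolding R2 using a by auto
        moreover have "h m = 0" using hm a by simp
        ultimately show ?thesis using L by simp
      qed
    qed
  qed
qed

lemma sq1: "((1::bit fps) + Y)^2 = 1 + Y^2"
  by (simp add: power2_eq_square algebra_simps two0 flip: mult_2)

lemma P8: "((1::bit fps) + fps_X)^8 = 1 + fps_X^8"
proof -
  have "((1::bit fps) + fps_X)^8 = ((((1::bit fps) + fps_X)^2)^2)^2" by (simp flip: power_mult)
  also have "\<dots> = 1 + fps_X^8" by (simp add: sq1 flip: power_mult)
  finally show ?thesis .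
qed

lemma Kpow4: "KK^4 = sqf (sqf KK)"
proof -
  have "KK^4 = (KK*KK)*(KK*KK)" by (simp add: power_numeral_reduce mult.assoc)
  also have "\<dots> = sqf (sqf KK)" by (simp add: frob)
  finally show ?thesis .
qed

definition uu :: "bit fps" where "uu = (1 + fps_X)^3 * KK"

lemma uu0: "fps_nth uu 0 = 1"
  by (simp add: uu_def KK_def fps_mult_nth h0)

lemma ucube: "uu^3 = 1 + fps_X"
proof -
  have "uu^4 = (1 + fps_X)^4 * ((1+fps_X)^8 * KK^4)" unfolding uu_def
    by (simp add: power_mult_distrib flip: power_add mult.assoc)
  also have "(1+fps_X)^8 * KK^4 = KK" by (simp add: P8 Kpow4 flip: KEQ)
  also have "(1 + fps_X)^4 * KK = (1 + fps_X) * uu" unfolding uu_def by (simp add: power_numeral_reduce mult.assoc)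
  finally have "uu * uu^3 = uu * (1 + fps_X)" by (simp add: power_numeral_reduce mult.commute)
  moreover have "uu \<noteq> 0" using uu0 by auto
  ultimately show ?thesis by simp
qed

definition G0 :: "bit fps" where
  "G0 = Abs_fps (\<lambda>p. if p = 0 then 0 else if (p+1) mod 8 < 4 then h ((p+1) div 8) else 0)"

lemma G0n: "fps_nth G0 p = (if p = 0 then 0 else if (p+1) mod 8 < 4 then h ((p+1) div 8) else 0)"
  by (simp add: G0_def)

lemma P3: "((1::bit fps) + fps_X)^3 = 1 + fps_X + fps_X^2 + fps_X^3"
proof -
  have "((1::bit fps) + fps_X)^3 = (1 + fps_X)^2 * (1 + fps_X)" by (simp add: power_numeral_reduce)
  also have "\<dots> = 1 + fps_X + fps_X^2 + fps_X^3" unfolding sq1 by (simp add: algebra_simps power_numeral_reduce)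
  finally show ?thesis .
qed

lemma dvd_shift: fixes n j :: nat assumes "j \<le> n" "j < 8" shows "8 dvd (n-j) \<longleftrightarrow> n mod 8 = j"
  using mod_eq_dvd_iff_nat[OF assms(1), of 8] assms(2) by simp
lemma div_shift: fixes n j :: nat assumes "n mod 8 = j" shows "(n-j) div 8 = n div 8"
proof -
  have "n = n div 8 * 8 + j" using div_mult_mod_eq[of n 8] assms by simp
  then have "n - j = n div 8 * 8" by simp
  then show ?thesis by simp
qed
lemma Kshift: "j \<le> n \<Longrightarrow> j < 8 \<Longrightarrow> fps_nth KK (n-j) = (if n mod 8 = j then h (n div 8) else 0)"
proof -
  assume a: "j \<le> n" "j < 8"
  have "8 dvd (n-j) \<longleftrightarrow> n mod 8 = j" using a by (rule dvd_shift)
  moreover have "n mod 8 = j \<Longrightarrow> (n-j) div 8 = n div 8" by (rule div_shift)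
  ultimately show ?thesis unfolding KKn by auto
qed

lemma XG: "fps_X * G0 = uu + 1 + fps_X"
proof (rule fps_ext)
  fix n
  have e: "uu + 1 + fps_X = KK + fps_X*KK + fps_X^2*KK + fps_X^3*KK + 1 + fps_X"
    unfolding uu_def P3 by (simp only: distrib_right mult_1)
  have R: "fps_nth (uu + 1 + fps_X) n = fps_nth KK n + (if n = 0 then 0 else fps_nth KK (n-1))
     + (if n < 2 then 0 else fps_nth KK (n-2)) + (if n < 3 then 0 else fps_nth KK (n-3))
     + (if n = 0 then 1 else 0) + (if n = 1 then 1 else 0)"
    unfolding e by (simp only: fps_add_nth fps_X_mult_nth fps_X_power_mult_nth fps_one_nth fps_X_nth)
  have L: "fps_nth (fps_X * G0) n = (if n \<le> 1 then 0 else if n mod 8 < 4 then h (n div 8) else 0)"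
    by (simp add: G0n)
  consider "n = 0" | "n = 1" | "n = 2" | "n \<ge> 3" by linarith
  then show "fps_nth (fps_X * G0) n = fps_nth (uu + 1 + fps_X) n"
  proof cases
    case 1 then show ?thesis unfolding L R by (simp add: KKn h0)
  next
    case 2 then show ?thesis unfolding L R by (simp add: KKn h0)
  next
    case 3 then show ?thesis unfolding L R by (simp add: KKn h0)
  next
    case 4
    have k: "fps_nth KK (n - j) = (if n mod 8 = j then h (n div 8) else 0)" if "j < 8" "j \<le> 3" for j
      using Kshift[of j n] that 4 by simp
    have k0: "fps_nth KK n = (if n mod 8 = 0 then h (n div 8) else 0)" using k[of 0] by (simp only: diff_zero)
    have nn: "\<not> n < 1" "\<not> n < 2" "\<not> n < 3" "n \<noteq> 0" "n \<noteq> 1" "\<not> n \<le> 1" using 4 by auto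
    have k1: "fps_nth KK (n-1) = (if n mod 8 = 1 then h (n div 8) else 0)" by (rule k) simp_all
    have k2: "fps_nth KK (n-2) = (if n mod 8 = 2 then h (n div 8) else 0)" by (rule k) simp_all
    have k3: "fps_nth KK (n-3) = (if n mod 8 = 3 then h (n div 8) else 0)" by (rule k) simp_all
    have t: "(if n = 0 then 0 else fps_nth KK (n-1)) = (if n mod 8 = 1 then h (n div 8) else 0)"
       "(if n < 2 then 0 else fps_nth KK (n-2)) = (if n mod 8 = 2 then h (n div 8) else 0)"
       "(if n < 3 then 0 else fps_nth KK (n-3)) = (if n mod 8 = 3 then h (n div 8) else 0)"
       "(if n = 0 then 1 else (0::bit)) = 0" "(if n = 1 then 1 else (0::bit)) = 0"
       "(if n \<le> 1 then 0 else if n mod 8 < 4 then h (n div 8) else 0) = (if n mod 8 < 4 then h (n div 8) else 0)"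
      by (simp_all only: k1 k2 k3 nn if_False)
    have sel: "(if r < 4 then x else 0) = (if r = 0 then x else 0) + (if r = 1 then x else 0) + (if r = 2 then x else 0) + (if r = 3 then x else 0) + 0 + 0"
      for r :: nat and x :: bit
    proof -
      consider "r = 0" | "r = 1" | "r = 2" | "r = 3" | "r \<ge> 4" by linarith
      then show ?thesis by cases simp_all
    qed
    show ?thesis unfolding L R k0 t by (rule sel)
  qed
qed

lemma num0: "(numeral (Num.Bit0 k) :: bit fps) = 0"
  by (simp only: numeral_Bit0 add_self)
lemma num1: "(numeral (Num.Bit1 k) :: bit fps) = 1"
  by (simp only: numeral_Bit1 add_self add_0_left)
lemma char2_tac: "(x::bit fps) + x = 0" "x + (x + y) = y" by (simp add: add_self, simp add: add.assoc[symmetric] add_self)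

lemma aux_cubic: "w = u + 1 + x \<Longrightarrow> u^3 = 1 + x \<Longrightarrow> (x+w)^3 + (x+w)^2 + w = (0::bit fps)"
  by (simp add: algebra_simps power2_eq_square power3_eq_cube num0 num1 two0 char2_tac)

lemma G0_0: "fps_nth G0 0 = 0" by (simp add: G0n)

lemma cubic: "(1 + G0)^3 * fps_X^2 + (1 + G0)^2 * fps_X + G0 = 0"
proof -
  let ?W = "fps_X * G0"
  have "fps_X^3 * ((1 + G0)^3 * fps_X^2 + (1 + G0)^2 * fps_X + G0) = fps_X^2 * ((fps_X + ?W)^3 + (fps_X + ?W)^2 + ?W)"
    by algebra
  also have "(fps_X + ?W)^3 + (fps_X + ?W)^2 + ?W = 0"
    by (rule aux_cubic[OF XG ucube])
  finally have "fps_X^3 * ((1 + G0)^3 * fps_X^2 + (1 + G0)^2 * fps_X + G0) = 0" by simp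
  then show ?thesis by simp
qed

lemma Feq2: "(1 + fps_X)^2 * TM_F = (1 + fps_X)^3 * TM_F^2 + fps_X"
  using Feq unfolding sq1 P3 power2_eq_square[of TM_F] frob .

lemma TM0: "fps_nth TM_F 0 = 0" by (simp add: TM_F_def)

lemma compose_F: "TM_F oo G0 = fps_X"
proof -
  let ?Y = "TM_F oo G0"
  have "((1 + fps_X)^2 * TM_F) oo G0 = ((1 + fps_X)^3 * TM_F^2 + fps_X) oo G0"
    using Feq2 by simp
  then have e: "(1 + G0)^2 * ?Y = (1 + G0)^3 * ?Y^2 + G0"
    by (simp add: fps_compose_mult_distrib[OF G0_0] fps_compose_add_distrib fps_compose_power[OF G0_0, symmetric]
          fps_X_fps_compose_startby0[OF G0_0])
  have Y0: "fps_nth ?Y 0 = 0" by (simp add: TM0)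
  let ?D = "?Y + fps_X"
  have "(1 + G0)^2 * ?D * ((1 + G0) * ?D + 1) = 
       ((1 + G0)^3 * ?Y^2 + (1 + G0)^2 * ?Y + G0) + ((1 + G0)^3 * fps_X^2 + (1 + G0)^2 * fps_X + G0) + 2 * (fps_X * ?Y * (1+G0)^3 - G0)"
    by algebra
  also have "(1 + G0)^3 * ?Y^2 + (1 + G0)^2 * ?Y + G0 = 0"
    using e by (metis add.commute add_self add.left_commute add_0_right)
  also note cubic
  finally have prod: "(1 + G0)^2 * ?D * ((1 + G0) * ?D + 1) = 0" by (simp add: two0)
  have n1: "(1 + G0)^2 \<noteq> 0"
    by (rule fps_nonzeroI[of _ 0]) (simp add: G0_0 power2_eq_square)
  have n2: "(1 + G0) * ?D + 1 \<noteq> 0"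
    by (rule fps_nonzeroI[of _ 0]) (simp add: G0_0 Y0 TM0)
  have "?D = 0" using prod n1 n2 by simp
  then show ?thesis by (metis add_self add_right_cancel)
qed

lemma G_eq: assumes "G oo TM_F = fps_X" shows "G = G0"
proof -
  have "G = G oo (TM_F oo G0)" by (simp add: compose_F)
  also have "\<dots> = (G oo TM_F) oo G0" by (rule fps_compose_assoc[OF G0_0 TM0])
  also have "\<dots> = G0" using assms by (simp add: G0_0)
  finally show ?thesis .
qed

lemma enum_at:
  fixes S :: "nat set"
  assumes inf: "infinite S" and x: "x \<in> S" and c: "card {y\<in>S. y < x} = i"
  shows "enumerate S i = x"
proof -
  obtain j where j: "enumerate S j = x" using enumerate_Ex[OF inf x] by blast
  have "{y\<in>S. y < x} = enumerate S ` {..<j}"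
  proof
    show "{y\<in>S. y < x} \<subseteq> enumerate S ` {..<j}"
    proof
      fix y assume y: "y \<in> {y\<in>S. y < x}"
      obtain l where l: "enumerate S l = y" using enumerate_Ex[OF inf] y by blast
      have "l < j" using l j y inf by auto
      then show "y \<in> enumerate S ` {..<j}" using l by blast
    qed
    show "enumerate S ` {..<j} \<subseteq> {y\<in>S. y < x}"
      using j inf enumerate_in_set[OF inf] by auto
  qed
  then have "card {y\<in>S. y < x} = j"
    using card_image[OF inj_on_subset[OF inj_enumerate[OF inf]]] by simp
  then show ?thesis using c j by simp
qed

lemma h_4: "h (4*w) = h w"
  by (cases "w = 0") (simp_all add: h.simps[of "4*w"])
lemma h_41: "h (4*w+1) = h w"
proof -
  have "(4*w+1) div 4 = w" "(4*w+1) mod 4 = 1" "4*w+1 \<noteq> 0" by simp_all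
  then show ?thesis by (subst h.simps) (simp only: if_False; simp)
qed
lemma h_41': "h (Suc (4*w)) = h w" using h_41 by simp
lemma h1: "h 1 = 1" by (metis h_41 h0 mult_0_right add_0)

lemma eight_inj: assumes "(r::nat) < 4" "r' < 4" "8*v + r = 8*v' + r'" shows "v = v' \<and> r = r'"
proof -
  have "(8*v+r) div 8 = v" "(8*v+r) mod 8 = r" "(8*v'+r') div 8 = v'" "(8*v'+r') mod 8 = r'" using assms(1,2) by simp_all
  then show ?thesis using assms(3) by metis
qed
lemma h_pow: "h (4^k) = 1"
proof (induction k)
  case 0 show ?case using h1 by (simp only: power_0)
next
  case (Suc k) then show ?case by (simp add: h_4)
qed

definition Bs :: "nat \<Rightarrow> nat set" where "Bs k = {v. v < 4^k \<and> h v \<noteq> 0}"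

lemma Bs_Suc: "Bs (Suc k) = (\<lambda>w. 4*w) ` Bs k \<union> (\<lambda>w. 4*w+1) ` Bs k"
proof
  show "Bs (Suc k) \<subseteq> (\<lambda>w. 4*w) ` Bs k \<union> (\<lambda>w. 4*w+1) ` Bs k"
  proof
    fix v assume v: "v \<in> Bs (Suc k)"
    have vd: "v = 4 * (v div 4) + v mod 4" by simp
    have lt: "v div 4 < 4^k" using v by (auto simp: Bs_def)
    show "v \<in> (\<lambda>w. 4*w) ` Bs k \<union> (\<lambda>w. 4*w+1) ` Bs k"
    proof (cases "v = 0")
      case True then show ?thesis using h0 by (auto simp: Bs_def)
    next
      case False
      have hv: "h v \<noteq> 0" using v by (simp add: Bs_def)
      have he: "h v = (if v mod 4 \<ge> 2 then 0 else h (v div 4))" using h.simps[of v] False by simp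
      have m: "v mod 4 < 2" using hv he by (cases "v mod 4 \<ge> 2") auto
      have hd: "h (v div 4) \<noteq> 0" using hv he m by simp
      have vB: "v div 4 \<in> Bs k" using lt hd by (simp add: Bs_def)
      have "v mod 4 = 0 \<or> v mod 4 = 1" using m by arith
      then show ?thesis
      proof
        assume "v mod 4 = 0"
        then have "v = 4 * (v div 4)" using vd by simp
        then show ?thesis using vB by blast
      next
        assume "v mod 4 = 1"
        then have "v = 4 * (v div 4) + 1" using vd by simp
        then show ?thesis using vB by blast
      qed
    qed
  qed
  show "(\<lambda>w. 4*w) ` Bs k \<union> (\<lambda>w. 4*w+1) ` Bs k \<subseteq> Bs (Suc k)"
    by (auto simp: Bs_def h_4 h_41 h_41')
qed

lemma card_Bs: "card (Bs k) = 2^k"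
proof (induction k)
  case 0
  have "Bs 0 = {0}" using h0 by (auto simp: Bs_def)
  then show ?case by simp
next
  case (Suc k)
  have fin: "finite (Bs k)" by (simp add: Bs_def)
  have "card (Bs (Suc k)) = card ((\<lambda>w. 4*w) ` Bs k) + card ((\<lambda>w. 4*w+1) ` Bs k)"
    unfolding Bs_Suc by (rule card_Un_disjoint) (use fin in \<open>auto dest: arg_cong[where f="\<lambda>x. x mod 4"]\<close>)
  also have "\<dots> = card (Bs k) + card (Bs k)"
    by (subst card_image, simp add: inj_on_def)+ simp
  finally show ?case using Suc by simp
qed

definition Zs :: "nat set" where "Zs = {m. m \<ge> 1 \<and> fps_nth G0 m = 0}"

lemma Zs_inf: "infinite Zs"
  unfolding infinite_nat_iff_unbounded_le
proof
  fix b
  have "8*b+3 \<in> Zs" by (simp add: Zs_def G0n)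
  then show "\<exists>n\<ge>b. n \<in> Zs" by (intro exI[of _ "8*b+3"]) simp
qed

lemma N_in: "8*4^k + 3 \<in> Zs" by (simp add: Zs_def G0n)

lemma count_Zs:
  shows "card {y\<in>Zs. y < 8*4^k+3} = 8*4^k - 4*2^k"
proof -
  define N where "N = (8::nat)*4^k + 3"
  define A where "A = {v. v \<le> 4^k \<and> h v \<noteq> 0}"
  have A: "A = Bs k \<union> {4^k}" using h_pow by (auto simp: A_def Bs_def)
  have cA: "card A = 2^k + 1" unfolding A using card_Bs[of k] by (simp add: Bs_def)
  define Q where "Q = {q. q \<le> N \<and> q mod 8 < 4 \<and> h (q div 8) \<noteq> 0}"
  have QA: "Q = (\<lambda>(v,r). 8*v + r) ` (A \<times> {..<4})"
  proof
    show "Q \<subseteq> (\<lambda>(v,r). 8*v + r) ` (A \<times> {..<4})"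
    proof
      fix q assume q: "q \<in> Q"
      have "q div 8 \<le> 4^k" using q unfolding Q_def N_def by auto
      then have "(q div 8, q mod 8) \<in> A \<times> {..<4}" using q by (auto simp: Q_def A_def)
      moreover have "q = (\<lambda>(v,r). 8*v + r) (q div 8, q mod 8)" by simp
      ultimately show "q \<in> (\<lambda>(v,r). 8*v + r) ` (A \<times> {..<4})" by blast
    qed
    show "(\<lambda>(v,r). 8*v + r) ` (A \<times> {..<4}) \<subseteq> Q"
      by (auto simp: Q_def A_def N_def)
  qed
  have inj: "inj_on (\<lambda>(v,r). 8*v + r) (A \<times> {..<4::nat})"
    unfolding inj_on_def using eight_inj by auto
  have finA: "finite A" by (simp add: A_def)
  have cQ: "card Q = 4 * (2^k + 1)" unfolding QA card_image[OF inj] using cA finA by (simp add: card_cartesian_product)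
  define Ones where "Ones = {y. 1 \<le> y \<and> y < N \<and> fps_nth G0 y \<noteq> 0}"
  have SO: "Suc ` Ones = Q - {0, 1}"
  proof
    show "Suc ` Ones \<subseteq> Q - {0, 1}"
      by (auto simp: Ones_def Q_def G0n split: if_splits)
    show "Q - {0, 1} \<subseteq> Suc ` Ones"
    proof
      fix q assume q: "q \<in> Q - {0, 1}"
      then have "q - 1 \<in> Ones" by (cases q) (auto simp: Ones_def Q_def G0n)
      moreover have "q = Suc (q - 1)" using q by auto
      ultimately show "q \<in> Suc ` Ones" by blast
    qed
  qed
  have finQ: "finite Q" by (simp add: Q_def)
  have "0 \<in> Q" "1 \<in> Q" using h0 by (auto simp: Q_def N_def)
  then have cO: "card Ones = 4 * 2^k + 2"
    using SO card_image[of Suc Ones] cQ finQ by (simp add: card_Diff_subset)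
  have eq: "{y\<in>Zs. y < N} = {1..<N} - Ones" by (auto simp: Zs_def Ones_def)
  have "card {y\<in>Zs. y < N} = (N - 1) - card Ones"
    unfolding eq by (subst card_Diff_subset) (auto simp: Ones_def)
  then show ?thesis using cO by (simp add: N_def)
qed

lemma pow_sub1_dvd: "(x::nat) \<ge> 1 \<Longrightarrow> (x - 1) dvd (x^c - 1)"
proof -
  assume x: "x \<ge> 1"
  have "x mod (x - 1) = 1 mod (x - 1)"
    using mod_eq_dvd_iff_nat[of 1 x "x-1"] x by simp
  then have "x^c mod (x-1) = 1^c mod (x-1)" by (metis power_mod)
  then have "x^c mod (x-1) = 1 mod (x-1)" by simp
  moreover have "1 \<le> x^c" using x by simp
  ultimately show ?thesis using mod_eq_dvd_iff_nat by blast
qed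

lemma exists_k:
  fixes m :: nat assumes m: "m \<ge> 2"
  shows "\<exists>k\<ge>1. m dvd (2*4^k - 2^k)"
proof -
  have "card ((\<lambda>l. 2^l mod m) ` {0..m}) \<le> card {..<m}"
    by (rule card_mono) (use m in auto)
  then have "card ((\<lambda>l. (2::nat)^l mod m) ` {0..m}) < card {0..m}" by simp
  then have "\<not> inj_on (\<lambda>l. (2::nat)^l mod m) {0..m}" by (rule pigeonhole)
  then obtain i j where ij: "i \<le> m" "j \<le> m" "i \<noteq> j" "(2::nat)^i mod m = 2^j mod m"
    unfolding inj_on_def by auto
  obtain a b where ab: "a < b" "(2::nat)^a mod m = 2^b mod m"
  proof (cases "i < j")
    case True then show ?thesis using that ij by blast
  next
    case False then have "j < i" using ij by auto
    then show ?thesis using that ij by metis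
  qed
  define t where "t = b - a"
  have t: "t \<ge> 1" "b = a + t" using ab by (auto simp: t_def)
  have "m dvd 2^b - 2^a" using mod_eq_dvd_iff_nat[of "2^a" "2^b" m] ab by (simp add: power_increasing)
  also have "2^b - 2^a = (2::nat)^a * (2^t - 1)" using t by (simp add: power_add diff_mult_distrib2)
  finally have d1: "m dvd 2^a * (2^t - 1)" .
  define k where "k = t * (a+2) - 1"
  have k1: "k + 1 = t * (a + 2)" using t by (simp add: k_def)
  have "t * (a+2) \<ge> 1 * (a+2)" using t(1) by (rule mult_le_mono1)
  then have "a + 2 \<le> k + 1" unfolding k1 by simp
  then have ka: "a + 1 \<le> k" by simp
  have "(2::nat)^t - 1 dvd (2^t)^(a+2) - 1" by (rule pow_sub1_dvd) simp
  also have "((2::nat)^t)^(a+2) = 2^(k+1)" unfolding k1 power_mult[symmetric] ..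
  finally have d2: "(2::nat)^t - 1 dvd 2^(k+1) - 1" .
  have d3: "(2::nat)^a dvd 2^k" using ka by (simp add: le_imp_power_dvd)
  have "m dvd 2^k * (2^(k+1) - 1)" using d1 mult_dvd_mono[OF d3 d2] dvd_trans by blast
  also have "(2::nat)^k * (2^(k+1) - 1) = 2*4^k - 2^k"
  proof -
    have e4: "(4::nat)^k = 2^k * 2^k" using power_mult_distrib[of "2::nat" 2 k] by simp
    have "(2::nat)^k * 2^(k+1) = 2 * 4^k" unfolding e4 by simp
    then show ?thesis by (simp add: diff_mult_distrib2)
  qed
  finally have "m dvd 2*4^k - 2^k" .
  moreover have "k \<ge> 1" using ka by simp
  ultimately show ?thesis by blast
qed

theorem mainTheorem13:
  fixes G :: "bit fps"
  assumes "fps_nth G 0 = 0"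
    and "TM_F oo G = fps_X"
    and "G oo TM_F = fps_X"
  shows "\<forall>m::nat. m \<ge> 2 \<longrightarrow> (\<exists>n::nat. n > 0 \<and> m dvd n \<and> zseq G n = 1)"
proof (intro allI impI)
  fix m :: nat assume m: "m \<ge> 2"
  have G: "G = G0" using G_eq[OF assms(3)] .
  obtain k where k: "k \<ge> 1" "m dvd 2*4^k - 2^k" using exists_k[OF m] by blast
  define n :: nat where "n = 2*4^k - 2^k"
  have pk: "(2::nat)^k \<le> 2*4^k"
  proof -
    have "(2::nat)^k \<le> 4^k" by (rule power_mono) auto
    then show ?thesis by simp
  qed
  have npos: "n > 0"
  proof -
    have "(2::nat)^k < 4^k" using k by (intro power_strict_mono) auto
    then show ?thesis unfolding n_def by simp
  qed
  have Zeq: "{m. m \<ge> 1 \<and> fps_nth G m = 0} = Zs" by (simp add: G Zs_def)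
  have c: "card {y\<in>Zs. y < 8*4^k+3} = 4 * n" unfolding count_Zs n_def by (simp add: diff_mult_distrib2)
  have d: "dseq G (4*n) = 8*4^k+3"
    unfolding dseq_def Zeq by (rule enum_at[OF Zs_inf N_in c])
  have i1: "int (8*4^k+3) + 1 = 4 * (2*4^k + 1)" by simp
  have i2: "int n = 2*4^k - 2^k" unfolding n_def using pk by (simp add: of_nat_diff)
  have "zseq G n = ((int (8*4^k+3) + 1) div 4 - int n) mod 2" by (simp add: zseq_def d)
  also have "\<dots> = (1 + 2^k) mod 2" unfolding i1 i2 by simp
  also have "\<dots> = 1" using k by (cases k) auto
  finally have "zseq G n = 1" .
  then show "\<exists>n::nat. n > 0 \<and> m dvd n \<and> zseq G n = 1" using npos k(2) unfolding n_def by blast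
qed

end
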